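(* For a hermitian $n\times n$ matrix $A$, let $\mathbb 1_{A,q}=1$ if $A$ has signature $(n-q,q)$ (i.e. $n-q$ positive and $q$ negative eigenvalues, hence nondegenerate) and $\mathbb 1_{A,q}=0$ otherwise. Then for all hermitian $n\times n$ matrices $A,B$ and all $q$, $$\big|\mathbb 1_{A,q}\det A-\mathbb 1_{B,q}\det B\big|\le\|A-B\|\sum_{0\le i\le n-1}\|A\|^i\|B\|^{n-1-i},$$ where $\|\cdot\|$ is the operator norm. *)

theory Defs
  imports "Jordan_Normal_Form.Char_Poly" "HOL-Computational_Algebra.Polynomial"
begin

definition hermitian_mat :: "nat \<Rightarrow> complex mat \<Rightarrow> bool" where
  "hermitian_mat n A \<longleftrightarrow> A \<in> carrier_mat n n \<and>
     (\<forall>i<n. \<forall>j<n. A $$ (i,j) = cnj (A $$ (j,i)))"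

definition vnorm :: "complex vec \<Rightarrow> real" where
  "vnorm v = sqrt (\<Sum>i<dim_vec v. (cmod (v $ i))\<^sup>2)"

definition op_norm :: "complex mat \<Rightarrow> real" where
  "op_norm A = Sup {vnorm (A *\<^sub>v v) | v. v \<in> carrier_vec (dim_col A) \<and> vnorm v \<le> 1}"

definition pos_eig_count :: "complex mat \<Rightarrow> nat" where
  "pos_eig_count A = (\<Sum>x\<in>{x. poly (char_poly A) x = 0 \<and> Im x = 0 \<and> Re x > 0}.
      order x (char_poly A))"

definition neg_eig_count :: "complex mat \<Rightarrow> nat" where
  "neg_eig_count A = (\<Sum>x\<in>{x. poly (char_poly A) x = 0 \<and> Im x = 0 \<and> Re x < 0}.
      order x (char_poly A))"

definition sig_ind :: "nat \<Rightarrow> complex mat \<Rightarrow> nat \<Rightarrow> real" where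
  "sig_ind n A q = (if q \<le> n \<and> pos_eig_count A = n - q \<and> neg_eig_count A = q then 1 else 0)"

end

theory Submission imports Defs "Jordan_Normal_Form.Schur_Decomposition" "HOL-Analysis.L2_Norm" "HOL-Computational_Algebra.Fundamental_Theorem_Algebra" begin

definition adj :: "complex mat \<Rightarrow> complex mat" where
  "adj M = mat (dim_col M) (dim_row M) (\<lambda>(i,j). cnj (M $$ (j,i)))"

definition ip :: "complex vec \<Rightarrow> complex vec \<Rightarrow> complex" where
  "ip x y = (\<Sum>i<dim_vec x. x $ i * cnj (y $ i))"

definition dmat :: "nat \<Rightarrow> (nat \<Rightarrow> real) \<Rightarrow> complex mat" where
  "dmat n lam = mat n n (\<lambda>(i,j). if i = j then complex_of_real (lam i) else 0)"

lemma adj_carrier[simp]: "M \<in> carrier_mat r c \<Longrightarrow> adj M \<in> carrier_mat c r"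
  by (auto simp: adj_def)

lemma adj_dims[simp]: "dim_row (adj M) = dim_col M" "dim_col (adj M) = dim_row M"
  by (auto simp: adj_def)

lemma adj_index[simp]: "i < dim_col M \<Longrightarrow> j < dim_row M \<Longrightarrow> adj M $$ (i,j) = cnj (M $$ (j,i))"
  by (auto simp: adj_def)

lemma adj_adj[simp]: "adj (adj M) = M"
  by (rule eq_matI) (auto simp: adj_def)

lemma adj_mult:
  assumes "A \<in> carrier_mat r k" "B \<in> carrier_mat k c"
  shows "adj (A * B) = adj B * adj A"
proof (rule eq_matI)
  fix i j assume ij: "i < dim_row (adj B * adj A)" "j < dim_col (adj B * adj A)"
  then have i: "i < c" and j: "j < r" using assms by auto
  have "adj (A * B) $$ (i,j) = cnj (\<Sum>l\<in>{0..<k}. A $$ (j,l) * B $$ (l,i))"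
    using assms i j by (simp add: adj_def scalar_prod_def)
  also have "\<dots> = (\<Sum>l\<in>{0..<k}. cnj (B $$ (l,i)) * cnj (A $$ (j,l)))"
    by (simp add: mult.commute)
  also have "\<dots> = (adj B * adj A) $$ (i,j)"
    using assms i j by (simp add: adj_def scalar_prod_def)
  finally show "adj (A * B) $$ (i,j) = (adj B * adj A) $$ (i,j)" .
qed (use assms in auto)

lemma hermitian_adj: "hermitian_mat n A \<longleftrightarrow> A \<in> carrier_mat n n \<and> adj A = A"
proof
  assume h: "hermitian_mat n A"
  then have A: "A \<in> carrier_mat n n" by (simp add: hermitian_mat_def)
  have "adj A = A"
  proof (rule eq_matI)
    fix i j assume ij: "i < dim_row A" "j < dim_col A"
    then have "adj A $$ (i,j) = cnj (A $$ (j,i))" using A by simp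
    also have "\<dots> = A $$ (i,j)"
    proof -
      have "A $$ (j,i) = cnj (A $$ (i,j))" using h A ij unfolding hermitian_mat_def by blast
      then show ?thesis by simp
    qed
    finally show "adj A $$ (i,j) = A $$ (i,j)" .
  qed (use A in simp_all)
  with A show "A \<in> carrier_mat n n \<and> adj A = A" by blast
next
  assume "A \<in> carrier_mat n n \<and> adj A = A"
  then have A: "A \<in> carrier_mat n n" and e: "adj A = A" by auto
  show "hermitian_mat n A" unfolding hermitian_mat_def
  proof (intro conjI allI impI A)
    fix i j assume "i < n" "j < n"
    then have "adj A $$ (i,j) = cnj (A $$ (j,i))" using A by simp
    then show "A $$ (i,j) = cnj (A $$ (j,i))" using e by simp
  qed
qed

lemma ip_mult:
  assumes A: "A \<in> carrier_mat r c" and x: "x \<in> carrier_vec c" and y: "y \<in> carrier_vec r"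
  shows "ip (A *\<^sub>v x) y = ip x (adj A *\<^sub>v y)"
proof -
  have "ip (A *\<^sub>v x) y = (\<Sum>i<r. (\<Sum>j\<in>{0..<c}. A $$ (i,j) * x $ j) * cnj (y $ i))"
    using A x y by (simp add: ip_def scalar_prod_def)
  also have "\<dots> = (\<Sum>i<r. \<Sum>j<c. A $$ (i,j) * x $ j * cnj (y $ i))"
    by (simp add: sum_distrib_right atLeast0LessThan)
  also have "\<dots> = (\<Sum>j<c. \<Sum>i<r. A $$ (i,j) * x $ j * cnj (y $ i))"
    by (rule sum.swap)
  also have "\<dots> = (\<Sum>j<c. x $ j * cnj (\<Sum>i\<in>{0..<r}. cnj (A $$ (i,j)) * y $ i))"
    by (simp add: sum_distrib_left atLeast0LessThan mult_ac)
  also have "\<dots> = ip x (adj A *\<^sub>v y)"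
    using A x y by (simp add: ip_def scalar_prod_def)
  finally show ?thesis .
qed

lemma unitary_right:
  assumes U: "U \<in> carrier_mat n n" and u: "adj U * U = 1\<^sub>m n"
  shows "U * adj U = 1\<^sub>m n"
  using mat_mult_left_right_inverse[OF adj_carrier[OF U] U u] .

lemma ip_unitary:
  assumes U: "U \<in> carrier_mat n n" and u: "adj U * U = 1\<^sub>m n"
    and x: "x \<in> carrier_vec n" and y: "y \<in> carrier_vec n"
  shows "ip (U *\<^sub>v x) (U *\<^sub>v y) = ip x y"
proof -
  have "ip (U *\<^sub>v x) (U *\<^sub>v y) = ip x (adj U *\<^sub>v (U *\<^sub>v y))"
    using ip_mult[OF U x] U y by simp
  also have "adj U *\<^sub>v (U *\<^sub>v y) = (adj U * U) *\<^sub>v y"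
    using assoc_mult_mat_vec[OF adj_carrier[OF U] U y] by simp
  also have "\<dots> = y" using u y by simp
  finally show ?thesis .
qed

lemma ip_self: "ip x x = complex_of_real ((vnorm x)^2)"
proof -
  have "ip x x = (\<Sum>i<dim_vec x. complex_of_real ((cmod (x $ i))^2))"
    unfolding ip_def by (rule sum.cong) (simp_all, metis complex_norm_square of_real_power)
  also have "\<dots> = complex_of_real ((vnorm x)^2)"
    by (simp add: vnorm_def sum_nonneg)
  finally show ?thesis .
qed

lemma vnorm_nonneg: "vnorm x \<ge> 0"
  by (simp add: vnorm_def sum_nonneg)

lemma vnorm_L2: "vnorm x = L2_set (\<lambda>i. cmod (x $ i)) {..<dim_vec x}"
  by (simp add: vnorm_def L2_set_def)

lemma vnorm_zero_iff: "vnorm x = 0 \<longleftrightarrow> x = 0\<^sub>v (dim_vec x)"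
proof
  assume "vnorm x = 0"
  then have "(\<Sum>i<dim_vec x. (cmod (x $ i))^2) = 0" unfolding vnorm_def by simp
  then have "\<forall>i\<in>{..<dim_vec x}. (cmod (x $ i))^2 = 0"
    by (subst (asm) sum_nonneg_eq_0_iff) auto
  then show "x = 0\<^sub>v (dim_vec x)" by (intro eq_vecI) auto
next
  assume "x = 0\<^sub>v (dim_vec x)"
  then have "\<And>i. i < dim_vec x \<Longrightarrow> x $ i = 0" by (metis index_zero_vec(1))
  then show "vnorm x = 0" by (simp add: vnorm_def)
qed

lemma cauchy_schwarz:
  assumes "dim_vec y = dim_vec x"
  shows "cmod (ip x y) \<le> vnorm x * vnorm y"
proof -
  have "cmod (ip x y) \<le> (\<Sum>i<dim_vec x. cmod (x $ i * cnj (y $ i)))"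
    unfolding ip_def by (rule norm_sum)
  also have "\<dots> = (\<Sum>i<dim_vec x. \<bar>cmod (x $ i)\<bar> * \<bar>cmod (y $ i)\<bar>)"
    by (simp add: norm_mult)
  also have "\<dots> \<le> L2_set (\<lambda>i. cmod (x $ i)) {..<dim_vec x} * L2_set (\<lambda>i. cmod (y $ i)) {..<dim_vec x}"
    by (rule L2_set_mult_ineq)
  also have "\<dots> = vnorm x * vnorm y" using assms by (simp add: vnorm_L2)
  finally show ?thesis .
qed

lemma vnorm_smult: "vnorm (c \<cdot>\<^sub>v x) = cmod c * vnorm x"
proof -
  have "vnorm (c \<cdot>\<^sub>v x) = sqrt ((cmod c)^2 * (\<Sum>i<dim_vec x. (cmod (x $ i))^2))"
    by (simp add: vnorm_def norm_mult power_mult_distrib sum_distrib_left)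
  also have "\<dots> = cmod c * vnorm x" by (simp add: real_sqrt_mult vnorm_def)
  finally show ?thesis .
qed

lemma opn_bdd: "bdd_above {vnorm (E *\<^sub>v v) | v. v \<in> carrier_vec (dim_col E) \<and> vnorm v \<le> 1}"
proof -
  define K where "K = (\<Sum>i<dim_row E. \<Sum>j<dim_col E. cmod (E $$ (i,j)))"
  have "vnorm (E *\<^sub>v v) \<le> K" if v: "v \<in> carrier_vec (dim_col E)" "vnorm v \<le> 1" for v
  proof -
    have vj: "cmod (v $ j) \<le> 1" if "j < dim_col E" for j
    proof -
      have "cmod (v $ j) \<le> L2_set (\<lambda>i. cmod (v $ i)) {..<dim_vec v}"
        by (rule member_le_L2_set) (use that v in auto)
      then show ?thesis using v by (simp add: vnorm_L2)
    qed
    have "vnorm (E *\<^sub>v v) = L2_set (\<lambda>i. cmod ((E *\<^sub>v v) $ i)) {..<dim_row E}"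
      unfolding vnorm_L2 dim_mult_mat_vec ..
    also have "\<dots> \<le> (\<Sum>i<dim_row E. \<bar>cmod ((E *\<^sub>v v) $ i)\<bar>)"
      by (rule L2_set_le_sum_abs)
    also have "\<dots> \<le> (\<Sum>i<dim_row E. \<Sum>j<dim_col E. cmod (E $$ (i,j)))"
    proof (rule sum_mono)
      fix i assume i: "i \<in> {..<dim_row E}"
      have "\<bar>cmod ((E *\<^sub>v v) $ i)\<bar> = cmod (\<Sum>j\<in>{0..<dim_col E}. E $$ (i,j) * v $ j)"
        using i v by (simp add: scalar_prod_def)
      also have "\<dots> \<le> (\<Sum>j\<in>{0..<dim_col E}. cmod (E $$ (i,j) * v $ j))" by (rule norm_sum)
      also have "\<dots> \<le> (\<Sum>j\<in>{0..<dim_col E}. cmod (E $$ (i,j)))"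
      proof (rule sum_mono)
        fix j assume "j \<in> {0..<dim_col E}"
        then have "cmod (v $ j) \<le> 1" using vj by simp
        then show "cmod (E $$ (i,j) * v $ j) \<le> cmod (E $$ (i,j))"
          by (simp add: norm_mult mult_left_le)
      qed
      finally show "\<bar>cmod ((E *\<^sub>v v) $ i)\<bar> \<le> (\<Sum>j<dim_col E. cmod (E $$ (i,j)))"
        by (simp add: atLeast0LessThan)
    qed
    finally show ?thesis unfolding K_def .
  qed
  then show ?thesis by (intro bdd_aboveI[of _ K]) blast
qed

lemma opn_nonneg: "0 \<le> op_norm E"
proof -
  have "vnorm (E *\<^sub>v 0\<^sub>v (dim_col E)) \<in> {vnorm (E *\<^sub>v v) | v. v \<in> carrier_vec (dim_col E) \<and> vnorm v \<le> 1}"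
    by (rule CollectI, rule exI[of _ "0\<^sub>v (dim_col E)"]) (simp add: vnorm_def)
  then have "vnorm (E *\<^sub>v 0\<^sub>v (dim_col E)) \<le> op_norm E"
    unfolding op_norm_def by (rule cSup_upper[OF _ opn_bdd])
  then show ?thesis using vnorm_nonneg order_trans by blast
qed

lemma opn_le:
  assumes v: "v \<in> carrier_vec (dim_col E)"
  shows "vnorm (E *\<^sub>v v) \<le> op_norm E * vnorm v"
proof (cases "vnorm v = 0")
  case True
  then have "v = 0\<^sub>v (dim_col E)" using vnorm_zero_iff v by auto
  then have "E *\<^sub>v v = 0\<^sub>v (dim_row E)" by auto
  then have "vnorm (E *\<^sub>v v) = 0" by (simp add: vnorm_zero_iff)
  then show ?thesis using True by simp
next
  case False
  define c where "c = vnorm v"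
  have c: "c > 0" using False vnorm_nonneg[of v] unfolding c_def by simp
  define w where "w = complex_of_real (1 / c) \<cdot>\<^sub>v v"
  have wc: "w \<in> carrier_vec (dim_col E)" using v by (simp add: w_def)
  have cm: "cmod (complex_of_real (1 / c)) = 1 / c" using c by (simp only: norm_of_real) simp
  have "vnorm w = 1" using c cm unfolding w_def vnorm_smult c_def by simp
  then have "vnorm (E *\<^sub>v w) \<in> {vnorm (E *\<^sub>v v) | v. v \<in> carrier_vec (dim_col E) \<and> vnorm v \<le> 1}"
    using wc by auto
  then have le: "vnorm (E *\<^sub>v w) \<le> op_norm E"
    unfolding op_norm_def by (rule cSup_upper[OF _ opn_bdd])
  have "E *\<^sub>v w = complex_of_real (1 / c) \<cdot>\<^sub>v (E *\<^sub>v v)"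
    unfolding w_def using mult_mat_vec[OF _ v] by (metis carrier_matI)
  then have "vnorm (E *\<^sub>v w) = vnorm (E *\<^sub>v v) / c"
    using c cm by (simp add: vnorm_smult)
  with le c show ?thesis unfolding c_def[symmetric] by (simp add: divide_le_eq mult.commute)
qed

lemma kernel_exists:
  fixes C :: "complex mat"
  assumes C: "C \<in> carrier_mat m n" and mn: "m < n"
  shows "\<exists>g. g \<in> carrier_vec n \<and> g \<noteq> 0\<^sub>v n \<and> C *\<^sub>v g = 0\<^sub>v m"
proof -
  define P where "P = mat n n (\<lambda>(i,j). if i < m then C $$ (i,j) else (0::complex))"
  have P: "P \<in> carrier_mat n n" by (simp add: P_def)
  have "P = mat\<^sub>r n n (\<lambda>i. if i = n - 1 then 0\<^sub>v n else row P i)"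
    by (rule eq_matI) (use mn in \<open>auto simp: P_def\<close>)
  also have "det \<dots> = 0" by (rule det_row_0) (use mn in \<open>auto simp: P_def row_def\<close>)
  finally have "det P = 0" .
  then obtain g where g: "g \<in> carrier_vec n" "g \<noteq> 0\<^sub>v n" "P *\<^sub>v g = 0\<^sub>v n"
    using det_0_iff_vec_prod_zero_field[OF P] by blast
  have "C *\<^sub>v g = 0\<^sub>v m"
  proof (rule eq_vecI)
    fix i assume "i < dim_vec (0\<^sub>v m :: complex vec)"
    then have i: "i < m" by simp
    have "(P *\<^sub>v g) $ i = 0" using g(3) i mn by simp
    moreover have "(P *\<^sub>v g) $ i = (C *\<^sub>v g) $ i"
      using i mn C g(1) by (simp add: P_def scalar_prod_def row_def)
    ultimately show "(C *\<^sub>v g) $ i = 0\<^sub>v m $ i" using i by simp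
  qed (use C in simp)
  with g show ?thesis by blast
qed

lemma unitary_conj:
  assumes U: "U \<in> carrier_mat n n" and u: "adj U * U = 1\<^sub>m n" and A: "A \<in> carrier_mat n n"
    and D: "adj U * A * U = D"
  shows "A * U = U * D"
proof -
  have u2: "U * adj U = 1\<^sub>m n" by (rule unitary_right[OF U u])
  have W: "adj U \<in> carrier_mat n n" using U by simp
  have WA: "adj U * A \<in> carrier_mat n n" using W A by simp
  have "U * D = U * (adj U * A * U)" using D by simp
  also have "\<dots> = (U * (adj U * A)) * U" using assoc_mult_mat[OF U WA U] by simp
  also have "U * (adj U * A) = (U * adj U) * A" using assoc_mult_mat[OF U W A] by simp
  also have "\<dots> = A" using u2 A by simp
  finally show ?thesis by simp
qed

lemma dmat_carrier[simp]: "dmat n a \<in> carrier_mat n n"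
  by (simp add: dmat_def)

lemma dmat_index[simp]: "i < n \<Longrightarrow> j < n \<Longrightarrow> dmat n a $$ (i,j) = (if i = j then complex_of_real (a i) else 0)"
  by (simp add: dmat_def)

lemma dmat_dims[simp]: "dim_row (dmat n a) = n" "dim_col (dmat n a) = n"
  by (simp_all add: dmat_def)

lemma dmat_mult_vec:
  assumes "x \<in> carrier_vec n" "i < n"
  shows "(dmat n a *\<^sub>v x) $ i = complex_of_real (a i) * x $ i"
proof -
  have "(dmat n a *\<^sub>v x) $ i = (\<Sum>j\<in>{0..<n}. (if i = j then complex_of_real (a i) else 0) * x $ j)"
    using assms by (simp add: dmat_def scalar_prod_def)
  also have "\<dots> = (\<Sum>j\<in>{0..<n}. if j = i then complex_of_real (a i) * x $ j else 0)"
    by (rule sum.cong) auto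
  also have "\<dots> = complex_of_real (a i) * x $ i" using assms by simp
  finally show ?thesis .
qed

lemma quad_form:
  assumes U: "U \<in> carrier_mat n n" and u: "adj U * U = 1\<^sub>m n" and A: "A \<in> carrier_mat n n"
    and D: "adj U * A * U = dmat n a" and x: "x \<in> carrier_vec n"
  shows "ip (A *\<^sub>v (U *\<^sub>v x)) (U *\<^sub>v x) = complex_of_real (\<Sum>i<n. a i * (cmod (x $ i))^2)"
proof -
  have AU: "A * U = U * dmat n a" by (rule unitary_conj[OF U u A D])
  have "A *\<^sub>v (U *\<^sub>v x) = U *\<^sub>v (dmat n a *\<^sub>v x)"
  proof -
    have "A *\<^sub>v (U *\<^sub>v x) = (A * U) *\<^sub>v x" using assoc_mult_mat_vec[OF A U x] by simp
    also have "\<dots> = U *\<^sub>v (dmat n a *\<^sub>v x)" unfolding AU using assoc_mult_mat_vec[OF U _ x] by simp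
    finally show ?thesis .
  qed
  then have "ip (A *\<^sub>v (U *\<^sub>v x)) (U *\<^sub>v x) = ip (dmat n a *\<^sub>v x) x"
    using ip_unitary[OF U u _ x] x mult_mat_vec_carrier[OF dmat_carrier x] by simp
  also have "\<dots> = (\<Sum>i<n. complex_of_real (a i) * x $ i * cnj (x $ i))"
    unfolding ip_def dim_mult_mat_vec using dmat_mult_vec[OF x]
    by (intro sum.cong) (auto simp: dmat_def)
  also have "\<dots> = (\<Sum>i<n. complex_of_real (a i * (cmod (x $ i))^2))"
    by (rule sum.cong) (simp_all add: mult.assoc, metis complex_norm_square of_real_power)
  also have "\<dots> = complex_of_real (\<Sum>i<n. a i * (cmod (x $ i))^2)" by simp
  finally show ?thesis .
qed

lemma vnorm_sq: "(vnorm v)^2 = (\<Sum>i<dim_vec v. (cmod (v $ i))^2)"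
  unfolding vnorm_def by (simp add: sum_nonneg)

lemma vnorm_unitary:
  assumes U: "U \<in> carrier_mat n n" and u: "adj U * U = 1\<^sub>m n" and x: "x \<in> carrier_vec n"
  shows "vnorm (U *\<^sub>v x) = vnorm x"
proof -
  have "complex_of_real ((vnorm (U *\<^sub>v x))^2) = complex_of_real ((vnorm x)^2)"
    using ip_unitary[OF U u x x] by (simp only: ip_self)
  then have "(vnorm (U *\<^sub>v x))^2 = (vnorm x)^2" using of_real_eq_iff by blast
  then show ?thesis using vnorm_nonneg by (metis power2_eq_iff_nonneg)
qed

lemma weyl_half:
  assumes A: "A \<in> carrier_mat n n" and U: "U \<in> carrier_mat n n" and u: "adj U * U = 1\<^sub>m n"
    and DA: "adj U * A * U = dmat n a"
    and sa: "\<forall>i j. i \<le> j \<longrightarrow> j < n \<longrightarrow> a j \<le> a i"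
    and B: "B \<in> carrier_mat n n" and V: "V \<in> carrier_mat n n" and v: "adj V * V = 1\<^sub>m n"
    and DB: "adj V * B * V = dmat n b"
    and sb: "\<forall>i j. i \<le> j \<longrightarrow> j < n \<longrightarrow> b j \<le> b i"
    and H: "\<And>x. x \<in> carrier_vec n \<Longrightarrow> Re (ip (A *\<^sub>v x) x) - Re (ip (B *\<^sub>v x) x) \<le> d * (vnorm x)^2"
    and k: "k < n"
  shows "a k \<le> b k + d"
proof -
  define C where "C = adj V * U"
  have Cc: "C \<in> carrier_mat n n" unfolding C_def using mult_carrier_mat[OF adj_carrier[OF V] U] .
  define M where "M = mat k (Suc k) (\<lambda>(j,i). C $$ (j,i))"
  obtain g where g: "g \<in> carrier_vec (Suc k)" "g \<noteq> 0\<^sub>v (Suc k)" "M *\<^sub>v g = 0\<^sub>v k"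
    using kernel_exists[of M k "Suc k"] by (auto simp: M_def)
  define al where "al = vec n (\<lambda>i. if i \<le> k then g $ i else 0)"
  have al: "al \<in> carrier_vec n" by (simp add: al_def)
  have al0: "al \<noteq> 0\<^sub>v n"
  proof
    assume "al = 0\<^sub>v n"
    have "g = 0\<^sub>v (Suc k)"
    proof (rule eq_vecI)
      fix i assume "i < dim_vec (0\<^sub>v (Suc k) :: complex vec)"
      then have i: "i \<le> k" by simp
      then have "al $ i = g $ i" using k by (simp add: al_def)
      then show "g $ i = 0\<^sub>v (Suc k) $ i" using \<open>al = 0\<^sub>v n\<close> i k by simp
    qed (use g in simp)
    with g show False by simp
  qed
  define x where "x = U *\<^sub>v al"
  have xc: "x \<in> carrier_vec n" unfolding x_def using mult_mat_vec_carrier[OF U al] .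
  define be where "be = adj V *\<^sub>v x"
  have bec: "be \<in> carrier_vec n" unfolding be_def using mult_mat_vec_carrier[OF adj_carrier[OF V] xc] .
  have xbe: "x = V *\<^sub>v be"
  proof -
    have "V *\<^sub>v be = (V * adj V) *\<^sub>v x"
      unfolding be_def using assoc_mult_mat_vec[OF V adj_carrier[OF V] xc] by simp
    also have "\<dots> = x" using unitary_right[OF V v] xc by simp
    finally show ?thesis by simp
  qed
  have be_low: "be $ j = 0" if j: "j < k" for j
  proof -
    have "be = C *\<^sub>v al"
      unfolding be_def x_def C_def using assoc_mult_mat_vec[OF adj_carrier[OF V] U al] by simp
    then have "be $ j = (\<Sum>i\<in>{0..<n}. C $$ (j,i) * al $ i)"
      using Cc al j k by (simp add: scalar_prod_def)
    also have "\<dots> = (\<Sum>i\<in>{0..<Suc k}. C $$ (j,i) * al $ i)"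
      by (rule sum.mono_neutral_right) (use k in \<open>auto simp: al_def\<close>)
    also have "\<dots> = (\<Sum>i\<in>{0..<Suc k}. M $$ (j,i) * g $ i)"
      by (rule sum.cong) (use k j in \<open>auto simp: al_def M_def\<close>)
    also have "\<dots> = (M *\<^sub>v g) $ j" using j g(1) by (simp add: M_def scalar_prod_def)
    also have "\<dots> = 0" using g j by simp
    finally show ?thesis .
  qed
  have Nal: "(vnorm x)^2 = (\<Sum>i<n. (cmod (al $ i))^2)"
    unfolding x_def vnorm_unitary[OF U u al] vnorm_sq using al by simp
  have Nbe: "(vnorm x)^2 = (\<Sum>i<n. (cmod (be $ i))^2)"
    unfolding xbe vnorm_unitary[OF V v bec] vnorm_sq using bec by simp
  have xpos: "(vnorm x)^2 > 0"
  proof -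
    have "vnorm x = vnorm al" unfolding x_def by (rule vnorm_unitary[OF U u al])
    moreover have "vnorm al \<noteq> 0" using al0 al vnorm_zero_iff[of al] by auto
    ultimately show ?thesis using vnorm_nonneg[of al] by simp
  qed
  have qa: "Re (ip (A *\<^sub>v x) x) = (\<Sum>i<n. a i * (cmod (al $ i))^2)"
    unfolding x_def quad_form[OF U u A DA al] by simp
  have qb: "Re (ip (B *\<^sub>v x) x) = (\<Sum>i<n. b i * (cmod (be $ i))^2)"
    unfolding xbe quad_form[OF V v B DB bec] by simp
  have "a k * (vnorm x)^2 = (\<Sum>i<n. a k * (cmod (al $ i))^2)"
    unfolding Nal by (simp add: sum_distrib_left)
  also have "\<dots> \<le> (\<Sum>i<n. a i * (cmod (al $ i))^2)"
  proof (rule sum_mono)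
    fix i assume i: "i \<in> {..<n}"
    show "a k * (cmod (al $ i))^2 \<le> a i * (cmod (al $ i))^2"
    proof (cases "i \<le> k")
      case True
      then have "a k \<le> a i" using sa k by blast
      then show ?thesis by (simp add: mult_right_mono)
    next
      case False
      then show ?thesis using i by (simp add: al_def)
    qed
  qed
  also have "\<dots> \<le> Re (ip (B *\<^sub>v x) x) + d * (vnorm x)^2"
    using H[OF xc] qa by simp
  also have "Re (ip (B *\<^sub>v x) x) \<le> b k * (vnorm x)^2"
  proof -
    have "(\<Sum>i<n. b i * (cmod (be $ i))^2) \<le> (\<Sum>i<n. b k * (cmod (be $ i))^2)"
    proof (rule sum_mono)
      fix i assume i: "i \<in> {..<n}"
      show "b i * (cmod (be $ i))^2 \<le> b k * (cmod (be $ i))^2"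
      proof (cases "i < k")
        case True
        then show ?thesis using be_low by simp
      next
        case False
        then have "b i \<le> b k" using sb i by auto
        then show ?thesis by (simp add: mult_right_mono)
      qed
    qed
    then show ?thesis unfolding qb Nbe by (simp add: sum_distrib_left)
  qed
  finally have "a k * (vnorm x)^2 \<le> (b k + d) * (vnorm x)^2"
    by (simp add: algebra_simps)
  then show ?thesis using xpos by simp
qed

lemma decomp_similar:
  assumes U: "U \<in> carrier_mat n n" and u: "adj U * U = 1\<^sub>m n" and A: "A \<in> carrier_mat n n"
    and D: "adj U * A * U = dmat n a"
  shows "A = U * dmat n a * adj U"
proof -
  have AU: "A * U = U * dmat n a" by (rule unitary_conj[OF U u A D])
  have "A = A * (U * adj U)" using unitary_right[OF U u] A by simp
  also have "\<dots> = (A * U) * adj U" using assoc_mult_mat[OF A U adj_carrier[OF U]] by simp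
  finally show ?thesis unfolding AU .
qed

lemma decomp_char_poly:
  assumes U: "U \<in> carrier_mat n n" and u: "adj U * U = 1\<^sub>m n" and A: "A \<in> carrier_mat n n"
    and D: "adj U * A * U = dmat n a"
  shows "char_poly A = (\<Prod>i<n. [:- complex_of_real (a i), 1:])"
proof -
  have sim: "similar_mat A (dmat n a)"
    by (rule similar_matI[where n=n and P=U and Q="adj U"])
      (use U A u unitary_right[OF U u] decomp_similar[OF U u A D] in auto)
  have ut: "upper_triangular (dmat n a)" by (simp add: upper_triangular_def dmat_def)
  have "char_poly A = char_poly (dmat n a)" by (rule char_poly_similar[OF sim])
  also have "\<dots> = (\<Prod>x\<leftarrow>diag_mat (dmat n a). [:- x, 1:])"
    by (rule char_poly_upper_triangular[OF dmat_carrier ut])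
  also have "diag_mat (dmat n a) = map (\<lambda>i. complex_of_real (a i)) [0..<n]"
    by (simp add: diag_mat_def dmat_def)
  also have "(\<Prod>x\<leftarrow>map (\<lambda>i. complex_of_real (a i)) [0..<n]. [:- x, 1:])
      = (\<Prod>i\<leftarrow>[0..<n]. [:- complex_of_real (a i), 1:])"
    by (simp add: comp_def)
  also have "\<dots> = (\<Prod>i\<in>set [0..<n]. [:- complex_of_real (a i), 1:])"
    by (rule prod.distinct_set_conv_list[symmetric]) simp
  also have "set [0..<n] = {..<n}" by auto
  finally show ?thesis .
qed

lemma decomp_det:
  assumes U: "U \<in> carrier_mat n n" and u: "adj U * U = 1\<^sub>m n" and A: "A \<in> carrier_mat n n"
    and D: "adj U * A * U = dmat n a"
  shows "det A = (\<Prod>i<n. complex_of_real (a i))"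
proof -
  have W: "adj U \<in> carrier_mat n n" using U by simp
  have "det A = det (U * dmat n a * adj U)" using decomp_similar[OF U u A D] by simp
  also have "\<dots> = det U * det (dmat n a) * det (adj U)"
    using det_mult[OF mult_carrier_mat[OF U dmat_carrier] W] det_mult[OF U dmat_carrier] by simp
  also have "\<dots> = det (dmat n a) * det (U * adj U)" using det_mult[OF U W] by (simp add: mult_ac)
  also have "\<dots> = det (dmat n a)" using unitary_right[OF U u] by simp
  also have "\<dots> = prod_list (diag_mat (dmat n a))"
    by (rule det_upper_triangular[OF _ dmat_carrier]) (simp add: upper_triangular_def dmat_def)
  also have "\<dots> = (\<Prod>i\<in>{0..<n}. dmat n a $$ (i,i))" by (simp add: prod_list_diag_prod)
  also have "\<dots> = (\<Prod>i<n. complex_of_real (a i))"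
    by (simp add: dmat_def atLeast0LessThan)
  finally show ?thesis .
qed

lemma decomp_eig_bound:
  assumes U: "U \<in> carrier_mat n n" and u: "adj U * U = 1\<^sub>m n" and A: "A \<in> carrier_mat n n"
    and D: "adj U * A * U = dmat n a" and i: "i < n"
  shows "\<bar>a i\<bar> \<le> op_norm A"
proof -
  define e where "e = (unit_vec n i :: complex vec)"
  have ec: "e \<in> carrier_vec n" by (simp add: e_def)
  define w where "w = U *\<^sub>v e"
  have wc: "w \<in> carrier_vec n" unfolding w_def using mult_mat_vec_carrier[OF U ec] .
  have AU: "A * U = U * dmat n a" by (rule unitary_conj[OF U u A D])
  have De: "dmat n a *\<^sub>v e = complex_of_real (a i) \<cdot>\<^sub>v e"
    by (rule eq_vecI) (use i in \<open>auto simp: e_def dmat_mult_vec\<close>)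
  have "A *\<^sub>v w = (A * U) *\<^sub>v e" unfolding w_def using assoc_mult_mat_vec[OF A U ec] by simp
  also have "\<dots> = U *\<^sub>v (dmat n a *\<^sub>v e)" unfolding AU using assoc_mult_mat_vec[OF U _ ec] by simp
  also have "\<dots> = complex_of_real (a i) \<cdot>\<^sub>v w" unfolding De w_def using mult_mat_vec[OF U ec] by simp
  finally have Aw: "A *\<^sub>v w = complex_of_real (a i) \<cdot>\<^sub>v w" .
  have "vnorm e = 1"
  proof -
    have "(vnorm e)^2 = (\<Sum>j<n. (cmod (e $ j))^2)" unfolding vnorm_sq by (simp add: e_def)
    also have "\<dots> = (\<Sum>j<n. if j = i then 1 else 0)" by (rule sum.cong) (use i in \<open>auto simp: e_def\<close>)
    also have "\<dots> = 1" using i by simp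
    finally show ?thesis using vnorm_nonneg[of e] by (simp add: power2_eq_1_iff)
  qed
  then have w1: "vnorm w = 1" unfolding w_def using vnorm_unitary[OF U u ec] by simp
  have "vnorm (A *\<^sub>v w) \<le> op_norm A * vnorm w" by (rule opn_le) (use A wc in simp)
  then show ?thesis unfolding Aw vnorm_smult w1 by simp
qed

lemma order_prod_linear:
  fixes n :: nat and c :: "nat \<Rightarrow> complex"
  shows "Polynomial.order x (\<Prod>i<n. [:- c i, 1:]) = card {i. i < n \<and> c i = x}"
proof (induction n)
  case 0
  then show ?case by (simp add: order_0I)
next
  case (Suc n)
  have nz: "(\<Prod>i<n. [:- c i, 1:]) \<noteq> 0" by (simp add: prod_zero_iff)
  have nz2: "[:- c n, 1:] \<noteq> 0" by simp
  have o1: "Polynomial.order x [:- c n, 1:] = (if c n = x then 1 else 0)"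
  proof (cases "c n = x")
    case True
    then show ?thesis using order_power_n_n[of x 1] by simp
  next
    case False
    then show ?thesis by (simp add: order_0I)
  qed
  have pq: "(\<Prod>i<n. [:- c i, 1:]) * [:- c n, 1:] \<noteq> 0" using nz nz2 by (simp only: mult_eq_0_iff) blast
  have "Polynomial.order x (\<Prod>i<Suc n. [:- c i, 1:]) = Polynomial.order x ((\<Prod>i<n. [:- c i, 1:]) * [:- c n, 1:])"
    by (simp only: prod.lessThan_Suc)
  also have "\<dots> = Polynomial.order x (\<Prod>i<n. [:- c i, 1:]) + Polynomial.order x [:- c n, 1:]"
    by (rule order_mult[OF pq])
  also have "\<dots> = card {i. i < n \<and> c i = x} + (if c n = x then 1 else 0)" using Suc o1 by simp
  also have "\<dots> = card {i. i < Suc n \<and> c i = x}"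
  proof -
    have "{i. i < Suc n \<and> c i = x} = {i. i < n \<and> c i = x} \<union> (if c n = x then {n} else {})"
      by (auto simp: less_Suc_eq)
    then show ?thesis by (simp add: card_Un_disjoint)
  qed
  finally show ?case .
qed

lemma count_roots:
  fixes n :: nat and a :: "nat \<Rightarrow> real"
  assumes "\<And>x. x \<in> R \<Longrightarrow> poly (\<Prod>i<n. [:- complex_of_real (a i), 1:]) x = 0"
    and fin: "finite R"
  shows "(\<Sum>x\<in>R. Polynomial.order x (\<Prod>i<n. [:- complex_of_real (a i), 1:])) = card {i. i < n \<and> complex_of_real (a i) \<in> R}"
proof -
  have "(\<Sum>x\<in>R. Polynomial.order x (\<Prod>i<n. [:- complex_of_real (a i), 1:])) = (\<Sum>x\<in>R. card {i. i < n \<and> complex_of_real (a i) = x})"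
    by (rule sum.cong[OF refl], rule order_prod_linear)
  also have "\<dots> = card (\<Union>x\<in>R. {i. i < n \<and> complex_of_real (a i) = x})"
    by (rule card_UN_disjoint[symmetric]) (use fin in \<open>auto intro: finite_subset[of _ "{..<n}"]\<close>)
  also have "(\<Union>x\<in>R. {i. i < n \<and> complex_of_real (a i) = x}) = {i. i < n \<and> complex_of_real (a i) \<in> R}"
    by auto
  finally show ?thesis .
qed

lemma decomp_counts:
  assumes U: "U \<in> carrier_mat n n" and u: "adj U * U = 1\<^sub>m n" and A: "A \<in> carrier_mat n n"
    and D: "adj U * A * U = dmat n a"
  shows "pos_eig_count A = card {i. i < n \<and> a i > 0}"
    and "neg_eig_count A = card {i. i < n \<and> a i < 0}"
proof -
  let ?p = "\<Prod>i<n. [:- complex_of_real (a i), 1:]"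
  have cp: "char_poly A = ?p" by (rule decomp_char_poly[OF U u A D])
  have p0: "?p \<noteq> 0" by (simp add: prod_zero_iff)
  have rootsfin: "finite {x. poly ?p x = 0}" using poly_roots_finite[OF p0] .
  have root: "poly ?p (complex_of_real (a i)) = 0" if "i < n" for i
    by (simp add: poly_prod prod_zero_iff) (use that in blast)
  have "pos_eig_count A = card {i. i < n \<and> complex_of_real (a i) \<in> {x. poly ?p x = 0 \<and> Im x = 0 \<and> Re x > 0}}"
    unfolding pos_eig_count_def cp
    by (rule count_roots) (use rootsfin in \<open>auto intro: finite_subset\<close>)
  also have "{i. i < n \<and> complex_of_real (a i) \<in> {x. poly ?p x = 0 \<and> Im x = 0 \<and> Re x > 0}} = {i. i < n \<and> a i > 0}"
    using root by auto
  finally show "pos_eig_count A = card {i. i < n \<and> a i > 0}" .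
  have "neg_eig_count A = card {i. i < n \<and> complex_of_real (a i) \<in> {x. poly ?p x = 0 \<and> Im x = 0 \<and> Re x < 0}}"
    unfolding neg_eig_count_def cp
    by (rule count_roots) (use rootsfin in \<open>auto intro: finite_subset\<close>)
  also have "{i. i < n \<and> complex_of_real (a i) \<in> {x. poly ?p x = 0 \<and> Im x = 0 \<and> Re x < 0}} = {i. i < n \<and> a i < 0}"
    using root by auto
  finally show "neg_eig_count A = card {i. i < n \<and> a i < 0}" .
qed

lemma ip_cscalar: "dim_vec y = dim_vec x \<Longrightarrow> ip x y = x \<bullet>c y"
  unfolding ip_def scalar_prod_def by (simp add: atLeast0LessThan)

lemma ip_smult_left: "ip (c \<cdot>\<^sub>v x) y = c * ip x y"
  unfolding ip_def by (simp add: sum_distrib_left mult.assoc)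

lemma ip_smult_right: "dim_vec y = dim_vec x \<Longrightarrow> ip x (c \<cdot>\<^sub>v y) = cnj c * ip x y"
  unfolding ip_def by (simp add: sum_distrib_left mult_ac)

lemma herm_eig_real:
  assumes h: "hermitian_mat m A" and v: "v \<in> carrier_vec m" and v0: "v \<noteq> 0\<^sub>v m"
    and ev: "A *\<^sub>v v = e \<cdot>\<^sub>v v"
  shows "cnj e = e"
proof -
  have A: "A \<in> carrier_mat m m" and aA: "adj A = A" using h hermitian_adj by auto
  have "ip (A *\<^sub>v v) v = ip v (A *\<^sub>v v)" using ip_mult[OF A v v] aA by simp
  then have "e * ip v v = cnj e * ip v v" unfolding ev using v
    by (simp add: ip_smult_left ip_smult_right)
  moreover have "ip v v \<noteq> 0"
  proof
    assume "ip v v = 0"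
    then have "vnorm v = 0" unfolding ip_self by simp
    then have "v = 0\<^sub>v m" using vnorm_zero_iff v by auto
    with v0 show False by simp
  qed
  ultimately show ?thesis by simp
qed

lemma unitary_ext:
  assumes v: "v \<in> carrier_vec m" and v0: "v \<noteq> 0\<^sub>v m"
  shows "\<exists>W. W \<in> carrier_mat m m \<and> adj W * W = 1\<^sub>m m \<and> col W 0 = complex_of_real (1 / vnorm v) \<cdot>\<^sub>v v"
proof -
  interpret cof_vec_space m "TYPE(complex)" .
  define b where "b = basis_completion v"
  from basis_completion[OF v v0, folded b_def]
  have dist_b: "distinct b" and indep: "\<not> lin_dep (set b)" and bc: "set b \<subseteq> carrier_vec m"
    and hdb: "hd b = v" and len_b: "length b = m" by auto
  have m0: "m \<noteq> 0"
  proof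
    assume "m = 0"
    then have "v = 0\<^sub>v m" using v by (intro eq_vecI) auto
    with v0 show False by simp
  qed
  from hdb len_b m0 obtain vs where bv: "b = v # vs" by (cases b) auto
  define ws where "ws = gram_schmidt m b"
  from gram_schmidt_result[OF bc dist_b indep refl, folded ws_def]
  have wsc: "set ws \<subseteq> carrier_vec m" and orth: "corthogonal ws" and lws: "length ws = m"
    by (auto simp: len_b)
  have hdws: "hd ws = v" using gram_schmidt_hd[OF v, of vs] unfolding ws_def bv .
  have ws0: "ws ! 0 = v" using hdws lws m0 by (metis hd_conv_nth list.size(3))
  have wsic: "ws ! i \<in> carrier_vec m" if "i < m" for i using wsc lws that by auto
  define c where "c = (\<lambda>i. 1 / vnorm (ws ! i))"
  define us where "us = map (\<lambda>w. complex_of_real (1 / vnorm w) \<cdot>\<^sub>v w) ws"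
  have lus: "length us = m" by (simp add: us_def lws)
  have usi: "us ! i = complex_of_real (c i) \<cdot>\<^sub>v (ws ! i)" if "i < m" for i
    using that lws by (simp add: us_def c_def)
  have usic: "us ! i \<in> carrier_vec m" if "i < m" for i using usi[OF that] wsic[OF that] by simp
  define W where "W = mat_of_cols m us"
  have Wc: "W \<in> carrier_mat m m" unfolding W_def using mat_of_cols_carrier(1)[of m us] lus by simp
  have Wij: "W $$ (k,j) = us ! j $ k" if "k < m" "j < m" for k j
    using that lus by (simp add: W_def mat_of_cols_def)
  have ipws: "ip (ws ! j) (ws ! i) = 0 \<longleftrightarrow> i \<noteq> j" if "i < m" "j < m" for i j
  proof -
    have "ip (ws ! j) (ws ! i) = ws ! j \<bullet>c ws ! i"
      using wsic[OF that(1)] wsic[OF that(2)] by (intro ip_cscalar) simp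
    then show ?thesis using corthogonalD[OF orth, of j i] that lws by auto
  qed
  have nz: "vnorm (ws ! i) \<noteq> 0" if "i < m" for i
  proof
    assume "vnorm (ws ! i) = 0"
    then have "ip (ws ! i) (ws ! i) = 0" by (simp add: ip_self)
    with ipws[OF that that] show False by simp
  qed
  have ipus: "ip (us ! j) (us ! i) = (if i = j then 1 else 0)" if "i < m" "j < m" for i j
  proof -
    have "ip (us ! j) (us ! i) = complex_of_real (c j) * complex_of_real (c i) * ip (ws ! j) (ws ! i)"
      unfolding usi[OF that(1)] usi[OF that(2)] using wsic[OF that(1)] wsic[OF that(2)]
      by (simp add: ip_smult_left ip_smult_right)
    also have "\<dots> = (if i = j then 1 else 0)"
    proof (cases "i = j")
      case True
      have "complex_of_real (c i) * complex_of_real (c i) * ip (ws ! i) (ws ! i)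
          = complex_of_real (c i * c i * (vnorm (ws ! i))^2)" by (simp add: ip_self)
      also have "c i * c i * (vnorm (ws ! i))^2 = 1" using nz[OF that(1)]
        by (simp add: c_def power2_eq_square)
      finally show ?thesis using True by simp
    next
      case False
      then show ?thesis using ipws[OF that] by simp
    qed
    finally show ?thesis .
  qed
  have "adj W * W = 1\<^sub>m m"
  proof (rule eq_matI)
    fix i j assume "i < dim_row (1\<^sub>m m :: complex mat)" "j < dim_col (1\<^sub>m m :: complex mat)"
    then have i: "i < m" and j: "j < m" by auto
    have "(adj W * W) $$ (i,j) = (\<Sum>k\<in>{0..<m}. cnj (W $$ (k,i)) * W $$ (k,j))"
      using Wc i j by (simp add: scalar_prod_def)
    also have "\<dots> = (\<Sum>k<m. us ! j $ k * cnj (us ! i $ k))"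
      by (rule sum.cong) (use i j Wij in \<open>auto simp: atLeast0LessThan mult.commute\<close>)
    also have "\<dots> = ip (us ! j) (us ! i)" unfolding ip_def using usic[OF j] by simp
    also have "\<dots> = 1\<^sub>m m $$ (i,j)" using ipus[OF i j] i j by simp
    finally show "(adj W * W) $$ (i,j) = 1\<^sub>m m $$ (i,j)" .
  qed (use Wc in auto)
  moreover have "col W 0 = complex_of_real (1 / vnorm v) \<cdot>\<^sub>v v"
  proof -
    have "col W 0 = us ! 0" unfolding W_def using m0 lus usic[of 0] by simp
    also have "\<dots> = complex_of_real (1 / vnorm v) \<cdot>\<^sub>v v" using m0 usi[of 0] ws0 by (simp add: c_def)
    finally show ?thesis .
  qed
  ultimately show ?thesis using Wc by blast
qed

definition bext :: "nat \<Rightarrow> complex \<Rightarrow> complex mat \<Rightarrow> complex mat" where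
  "bext n c M = mat (Suc n) (Suc n) (\<lambda>(i,j). if i = 0 \<and> j = 0 then c else if i = 0 \<or> j = 0 then 0 else M $$ (i - 1, j - 1))"

lemma bext_carrier[simp]: "bext n c M \<in> carrier_mat (Suc n) (Suc n)"
  by (simp add: bext_def)

lemma bext_dims[simp]: "dim_row (bext n c M) = Suc n" "dim_col (bext n c M) = Suc n"
  by (simp_all add: bext_def)

lemma bext_index[simp]:
  "i < Suc n \<Longrightarrow> j < Suc n \<Longrightarrow> bext n c M $$ (i,j) = (if i = 0 \<and> j = 0 then c else if i = 0 \<or> j = 0 then 0 else M $$ (i - 1, j - 1))"
  by (simp add: bext_def)

lemma bext_mult:
  assumes M: "M \<in> carrier_mat n n" and N: "N \<in> carrier_mat n n"
  shows "bext n c M * bext n d N = bext n (c * d) (M * N)"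
proof (rule eq_matI)
  fix i j assume "i < dim_row (bext n (c * d) (M * N))" "j < dim_col (bext n (c * d) (M * N))"
  then have i: "i < Suc n" and j: "j < Suc n" by auto
  have "(bext n c M * bext n d N) $$ (i,j) = (\<Sum>k\<in>{0..<Suc n}. bext n c M $$ (i,k) * bext n d N $$ (k,j))"
    using i j by (simp add: scalar_prod_def)
  also have "\<dots> = bext n c M $$ (i,0) * bext n d N $$ (0,j) + (\<Sum>k\<in>{0..<n}. bext n c M $$ (i,Suc k) * bext n d N $$ (Suc k,j))"
    by (subst sum.atLeast0_lessThan_Suc_shift) (simp add: comp_def)
  also have "\<dots> = bext n (c * d) (M * N) $$ (i,j)"
  proof (cases i)
    case 0
    then show ?thesis using j by (cases j) auto
  next
    case (Suc i')
    then have i': "i' < n" using i by simp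
    show ?thesis
    proof (cases j)
      case 0
      then show ?thesis using Suc i by simp
    next
      case (Suc j')
      then have j': "j' < n" using j by simp
      have "(\<Sum>k\<in>{0..<n}. bext n c M $$ (i,Suc k) * bext n d N $$ (Suc k,j)) = (\<Sum>k\<in>{0..<n}. M $$ (i',k) * N $$ (k,j'))"
        by (rule sum.cong) (use \<open>i = Suc i'\<close> Suc i' j' in auto)
      also have "\<dots> = (M * N) $$ (i',j')" using M N i' j' by (simp add: scalar_prod_def)
      finally show ?thesis using \<open>i = Suc i'\<close> Suc i j by simp
    qed
  qed
  finally show "(bext n c M * bext n d N) $$ (i,j) = bext n (c * d) (M * N) $$ (i,j)" .
qed auto

lemma bext_adj:
  assumes M: "M \<in> carrier_mat n n"
  shows "adj (bext n c M) = bext n (cnj c) (adj M)"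
  by (rule eq_matI) (use M in \<open>auto simp: adj_def bext_def\<close>)

lemma bext_one: "bext n 1 (1\<^sub>m n) = 1\<^sub>m (Suc n)"
  by (rule eq_matI) (auto simp: bext_def)

lemma bext_dmat: "bext n (complex_of_real r) (dmat n a) = dmat (Suc n) (case_nat r a)"
  by (rule eq_matI) (auto simp: bext_def dmat_def split: nat.splits)

lemma spectral:
  assumes "hermitian_mat n A"
  shows "\<exists>U a. U \<in> carrier_mat n n \<and> adj U * U = 1\<^sub>m n \<and> adj U * A * U = dmat n a
    \<and> (\<forall>i j. i \<le> j \<longrightarrow> j < n \<longrightarrow> a j \<le> a i)"
  using assms
proof (induction n arbitrary: A)
  case 0
  then have A: "A \<in> carrier_mat 0 0" by (simp add: hermitian_mat_def)
  have "adj (1\<^sub>m 0) * 1\<^sub>m 0 = (1\<^sub>m 0 :: complex mat)" by (rule eq_matI) auto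
  moreover have "adj (1\<^sub>m 0) * A * 1\<^sub>m 0 = dmat 0 (\<lambda>_. 0)" by (rule eq_matI) (use A in auto)
  ultimately show ?case by (intro exI[of _ "1\<^sub>m 0"] exI[of _ "\<lambda>_. 0"]) auto
next
  case (Suc n)
  have h: "hermitian_mat (Suc n) A" by fact
  then have A: "A \<in> carrier_mat (Suc n) (Suc n)" and aA: "adj A = A" using hermitian_adj by auto
  define R where "R = {x. poly (char_poly A) x = 0}"
  have degA: "degree (char_poly A) = Suc n" using degree_monic_char_poly[OF A] by simp
  then have cp0: "char_poly A \<noteq> 0" by auto
  have finR: "finite R" unfolding R_def using poly_roots_finite[OF cp0] .
  have Rne: "R \<noteq> {}"
  proof -
    have "\<not> constant (poly (char_poly A))" using constant_degree[of "char_poly A"] degA by simp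
    then obtain z where "poly (char_poly A) z = 0" using fundamental_theorem_of_algebra by blast
    then show ?thesis unfolding R_def by blast
  qed
  have Rreal: "cnj x = x" if "x \<in> R" for x
  proof -
    have "eigenvalue A x" using that unfolding R_def eigenvalue_root_char_poly[OF A] by simp
    then obtain v where "eigenvector A v x" unfolding eigenvalue_def by blast
    then have "v \<in> carrier_vec (Suc n)" "v \<noteq> 0\<^sub>v (Suc n)" "A *\<^sub>v v = x \<cdot>\<^sub>v v"
      unfolding eigenvector_def using A by auto
    then show ?thesis using herm_eig_real[OF h] by blast
  qed
  define m where "m = Max (Re ` R)"
  have mR: "m \<in> Re ` R" unfolding m_def using finR Rne by simp
  have mmax: "Re x \<le> m" if "x \<in> R" for x unfolding m_def using finR that by simp
  define e where "e = complex_of_real m"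
  have eR: "e \<in> R"
  proof -
    obtain x where x: "x \<in> R" "Re x = m" using mR by blast
    have "x = complex_of_real (Re x)" using Rreal[OF x(1)] by (metis Reals_cnj_iff complex_is_Real_iff of_real_Re)
    then show ?thesis using x unfolding e_def by simp
  qed
  have "eigenvalue A e" using eR unfolding R_def eigenvalue_root_char_poly[OF A] by simp
  then have "eigenvector A (find_eigenvector A e) e" by (rule find_eigenvector[OF A])
  then obtain v where v: "v \<in> carrier_vec (Suc n)" and v0: "v \<noteq> 0\<^sub>v (Suc n)" and Av: "A *\<^sub>v v = e \<cdot>\<^sub>v v"
    unfolding eigenvector_def using A by auto
  obtain W where Wc: "W \<in> carrier_mat (Suc n) (Suc n)" and wu: "adj W * W = 1\<^sub>m (Suc n)"
    and W0: "col W 0 = complex_of_real (1 / vnorm v) \<cdot>\<^sub>v v"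
    using unitary_ext[OF v v0] by blast
  have Wa: "adj W \<in> carrier_mat (Suc n) (Suc n)" using Wc by simp
  define A' where "A' = adj W * A * W"
  have A'c: "A' \<in> carrier_mat (Suc n) (Suc n)" unfolding A'_def using mult_carrier_mat[OF mult_carrier_mat[OF Wa A] Wc] .
  have aA': "adj A' = A'"
  proof -
    have "adj A' = adj W * adj (adj W * A)" unfolding A'_def
      using adj_mult[OF mult_carrier_mat[OF Wa A] Wc] by simp
    also have "adj (adj W * A) = adj A * adj (adj W)" using adj_mult[OF Wa A] .
    finally show ?thesis unfolding aA adj_adj A'_def
      using assoc_mult_mat[OF Wa A Wc] by simp
  qed
  have AWcol: "col (A * W) 0 = e \<cdot>\<^sub>v col W 0"
  proof -
    have "col (A * W) 0 = A *\<^sub>v col W 0" using col_mult2[OF A Wc] by simp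
    also have "\<dots> = complex_of_real (1 / vnorm v) \<cdot>\<^sub>v (A *\<^sub>v v)" unfolding W0 using mult_mat_vec[OF A v] .
    also have "\<dots> = e \<cdot>\<^sub>v col W 0" unfolding Av W0 by (simp add: smult_smult_assoc mult.commute)
    finally show ?thesis .
  qed
  have A'col: "A' $$ (i,0) = (if i = 0 then e else 0)" if i: "i < Suc n" for i
  proof -
    have "A' = adj W * (A * W)" unfolding A'_def using assoc_mult_mat[OF Wa A Wc] .
    then have "A' $$ (i,0) = row (adj W) i \<bullet> col (A * W) 0" using i Wa A Wc by simp
    also have "\<dots> = e * (row (adj W) i \<bullet> col W 0)" unfolding AWcol
      using Wa Wc i by (simp add: scalar_prod_smult_distrib[of _ "Suc n"])
    also have "row (adj W) i \<bullet> col W 0 = (adj W * W) $$ (i,0)" using i Wa Wc by simp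
    also have "\<dots> = (if i = 0 then 1 else 0)" unfolding wu using i by simp
    finally show ?thesis by simp
  qed
  have A'row: "A' $$ (0,j) = (if j = 0 then e else 0)" if j: "j < Suc n" for j
  proof -
    have "A' $$ (0,j) = adj A' $$ (0,j)" unfolding aA' ..
    also have "\<dots> = cnj (A' $$ (j,0))" using A'c j by simp
    also have "\<dots> = (if j = 0 then e else 0)" using A'col[OF j] by (simp add: e_def)
    finally show ?thesis .
  qed
  define A3 where "A3 = mat n n (\<lambda>(i,j). A' $$ (Suc i, Suc j))"
  have A3c: "A3 \<in> carrier_mat n n" by (simp add: A3_def)
  have A'eq: "A' = bext n e A3"
    by (rule eq_matI) (use A'c A'col A'row in \<open>auto simp: A3_def bext_def\<close>)
  have h3: "hermitian_mat n A3" unfolding hermitian_adj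
  proof (intro conjI A3c)
    show "adj A3 = A3"
    proof (rule eq_matI)
      fix i j assume "i < dim_row A3" "j < dim_col A3"
      then have i: "i < n" and j: "j < n" using A3c by auto
      have "adj A3 $$ (i,j) = cnj (A' $$ (Suc j, Suc i))" using i j by (simp add: A3_def)
      also have "\<dots> = adj A' $$ (Suc i, Suc j)" using A'c i j by simp
      also have "\<dots> = A3 $$ (i,j)" unfolding aA' using i j by (simp add: A3_def)
      finally show "adj A3 $$ (i,j) = A3 $$ (i,j)" .
    qed (use A3c in auto)
  qed
  from Suc.IH[OF h3] obtain U3 a3 where U3: "U3 \<in> carrier_mat n n" and u3: "adj U3 * U3 = 1\<^sub>m n"
    and D3: "adj U3 * A3 * U3 = dmat n a3" and s3: "\<forall>i j. i \<le> j \<longrightarrow> j < n \<longrightarrow> a3 j \<le> a3 i"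
    by blast
  define P where "P = bext n 1 U3"
  define P' where "P' = bext n 1 (adj U3)"
  have Pc: "P \<in> carrier_mat (Suc n) (Suc n)" and P'c: "P' \<in> carrier_mat (Suc n) (Suc n)"
    by (simp_all add: P_def P'_def)
  have adjP: "adj P = P'" unfolding P_def P'_def using bext_adj[OF U3] by simp
  define U where "U = W * P"
  have Uc: "U \<in> carrier_mat (Suc n) (Suc n)" unfolding U_def using mult_carrier_mat[OF Wc Pc] .
  have adjU: "adj U = P' * adj W" unfolding U_def using adj_mult[OF Wc Pc] adjP by simp
  have uu: "adj U * U = 1\<^sub>m (Suc n)"
  proof -
    have "adj U * U = P' * (adj W * (W * P))" unfolding adjU unfolding U_def
      using assoc_mult_mat[OF P'c Wa mult_carrier_mat[OF Wc Pc]] .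
    also have "adj W * (W * P) = (adj W * W) * P" using assoc_mult_mat[OF Wa Wc Pc] by simp
    also have "\<dots> = P" unfolding wu using Pc by simp
    also have "P' * P = bext n 1 (adj U3 * U3)" unfolding P'_def P_def
      using bext_mult[OF adj_carrier[OF U3] U3] by simp
    also have "\<dots> = 1\<^sub>m (Suc n)" unfolding u3 bext_one ..
    finally show ?thesis .
  qed
  define a where "a = case_nat m a3"
  have DU: "adj U * A * U = dmat (Suc n) a"
  proof -
    have WA: "adj W * A \<in> carrier_mat (Suc n) (Suc n)" using mult_carrier_mat[OF Wa A] .
    have "adj U * A * U = P' * (adj W * A) * (W * P)" unfolding adjU unfolding U_def
      using assoc_mult_mat[OF P'c Wa A] by simp
    also have "\<dots> = P' * ((adj W * A) * (W * P))"
      using assoc_mult_mat[OF P'c WA mult_carrier_mat[OF Wc Pc]] .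
    also have "(adj W * A) * (W * P) = A' * P"
      unfolding A'_def using assoc_mult_mat[OF WA Wc Pc] by simp
    also have "A' * P = bext n e (A3 * U3)" unfolding A'eq P_def using bext_mult[OF A3c U3] by simp
    also have "P' * \<dots> = bext n e (adj U3 * (A3 * U3))" unfolding P'_def
      using bext_mult[OF adj_carrier[OF U3] mult_carrier_mat[OF A3c U3]] by simp
    also have "adj U3 * (A3 * U3) = dmat n a3"
      using assoc_mult_mat[OF adj_carrier[OF U3] A3c U3] D3 by simp
    also have "bext n e (dmat n a3) = dmat (Suc n) a" unfolding e_def a_def by (rule bext_dmat)
    finally show ?thesis .
  qed
  have sorted: "\<forall>i j. i \<le> j \<longrightarrow> j < Suc n \<longrightarrow> a j \<le> a i"
  proof (intro allI impI)
    fix i j assume ij: "i \<le> j" "j < Suc n"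
    show "a j \<le> a i"
    proof (cases i)
      case 0
      have "a j \<le> m"
      proof (cases j)
        case 0
        then show ?thesis by (simp add: a_def)
      next
        case (Suc j')
        have cp: "char_poly A = (\<Prod>i<Suc n. [:- complex_of_real (a i), 1:])"
          by (rule decomp_char_poly[OF Uc uu A DU])
        have "poly (char_poly A) (complex_of_real (a j)) = 0"
          unfolding cp poly_prod by (subst prod_zero_iff) (use ij(2) in \<open>auto intro!: bexI[of _ j]\<close>)
        then have "complex_of_real (a j) \<in> R" unfolding R_def by simp
        from mmax[OF this] show ?thesis by simp
      qed
      then show ?thesis using 0 by (simp add: a_def)
    next
      case (Suc i')
      then obtain j' where j': "j = Suc j'" using ij by (cases j) auto
      then show ?thesis using s3 ij Suc by (simp add: a_def)
    qed
  qed
  show ?case using Uc uu DU sorted by blast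
qed

lemma prod_abs_le:
  fixes f :: "nat \<Rightarrow> real"
  assumes "\<And>i. i \<in> A \<Longrightarrow> \<bar>f i\<bar> \<le> x"
  shows "\<bar>prod f A\<bar> \<le> x ^ card A"
proof -
  have "\<bar>prod f A\<bar> = (\<Prod>i\<in>A. \<bar>f i\<bar>)" by (simp add: abs_prod)
  also have "\<dots> \<le> (\<Prod>i\<in>A. x)" by (rule prod_mono) (use assms in auto)
  also have "\<dots> = x ^ card A" by simp
  finally show ?thesis .
qed

lemma prod_diff_bound:
  fixes f g :: "nat \<Rightarrow> real"
  assumes "\<And>i. i < n \<Longrightarrow> \<bar>f i\<bar> \<le> x" "\<And>i. i < n \<Longrightarrow> \<bar>g i\<bar> \<le> y"
    "\<And>i. i < n \<Longrightarrow> \<bar>f i - g i\<bar> \<le> d"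
  shows "\<bar>(\<Prod>i<n. f i) - (\<Prod>i<n. g i)\<bar> \<le> d * (\<Sum>i<n. x ^ i * y ^ (n - 1 - i))"
  using assms
proof (induction n)
  case 0
  then show ?case by simp
next
  case (Suc n)
  have x0: "0 \<le> x" using Suc.prems(1)[of n] by simp
  have y0: "0 \<le> y" using Suc.prems(2)[of n] by simp
  have d0: "0 \<le> d" using Suc.prems(3)[of n] by simp
  have IH: "\<bar>(\<Prod>i<n. f i) - (\<Prod>i<n. g i)\<bar> \<le> d * (\<Sum>i<n. x ^ i * y ^ (n - 1 - i))"
    using Suc by simp
  have pf: "\<bar>\<Prod>i<n. f i\<bar> \<le> x ^ n" using prod_abs_le[of "{..<n}" f x] Suc.prems(1) by simp
  have "(\<Prod>i<Suc n. f i) - (\<Prod>i<Suc n. g i)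
      = (\<Prod>i<n. f i) * (f n - g n) + ((\<Prod>i<n. f i) - (\<Prod>i<n. g i)) * g n"
    by (simp add: algebra_simps)
  then have "\<bar>(\<Prod>i<Suc n. f i) - (\<Prod>i<Suc n. g i)\<bar>
      \<le> \<bar>\<Prod>i<n. f i\<bar> * \<bar>f n - g n\<bar> + \<bar>(\<Prod>i<n. f i) - (\<Prod>i<n. g i)\<bar> * \<bar>g n\<bar>"
    by (metis abs_mult abs_triangle_ineq)
  also have "\<dots> \<le> x ^ n * d + (d * (\<Sum>i<n. x ^ i * y ^ (n - 1 - i))) * y"
    by (intro add_mono mult_mono) (use pf IH Suc.prems x0 y0 d0 in auto)
  also have "\<dots> = d * (x ^ n + (\<Sum>i<n. x ^ i * (y ^ (n - 1 - i) * y)))"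
    by (simp add: algebra_simps sum_distrib_left sum_distrib_right)
  also have "(\<Sum>i<n. x ^ i * (y ^ (n - 1 - i) * y)) = (\<Sum>i<n. x ^ i * y ^ (Suc n - 1 - i))"
  proof (rule sum.cong)
    fix i assume "i \<in> {..<n}"
    then have "Suc n - 1 - i = Suc (n - 1 - i)" by auto
    then show "x ^ i * (y ^ (n - 1 - i) * y) = x ^ i * y ^ (Suc n - 1 - i)" by simp
  qed simp
  also have "x ^ n + \<dots> = (\<Sum>i<Suc n. x ^ i * y ^ (Suc n - 1 - i))" by simp
  finally show ?case .
qed

lemma small_eig_bound:
  fixes f :: "nat \<Rightarrow> real"
  assumes "\<And>i. i < n \<Longrightarrow> \<bar>f i\<bar> \<le> x" and k: "k < n" and fk: "\<bar>f k\<bar> \<le> d"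
  shows "\<bar>\<Prod>i<n. f i\<bar> \<le> d * x ^ (n - 1)"
proof -
  have "(\<Prod>i<n. f i) = f k * (\<Prod>i\<in>{..<n} - {k}. f i)"
    using k by (intro prod.remove) auto
  then have "\<bar>\<Prod>i<n. f i\<bar> = \<bar>f k\<bar> * \<bar>\<Prod>i\<in>{..<n} - {k}. f i\<bar>" by (simp add: abs_mult)
  also have "\<dots> \<le> d * x ^ card ({..<n} - {k})"
    by (intro mult_mono prod_abs_le) (use assms in auto)
  also have "card ({..<n} - {k}) = n - 1" using k by simp
  finally show ?thesis .
qed

lemma ip_minus_left: "dim_vec u = dim_vec w \<Longrightarrow> ip (u - w) y = ip u y - ip w y"
  unfolding ip_def by (simp add: sum_subtractf[symmetric] algebra_simps)

lemma form_bound: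
  assumes A: "A \<in> carrier_mat n n" and B: "B \<in> carrier_mat n n" and x: "x \<in> carrier_vec n"
  shows "\<bar>Re (ip (A *\<^sub>v x) x) - Re (ip (B *\<^sub>v x) x)\<bar> \<le> op_norm (A - B) * (vnorm x)^2"
proof -
  have AB: "A - B \<in> carrier_mat n n" using minus_carrier_mat[OF B] .
  have "(A - B) *\<^sub>v x = A *\<^sub>v x - B *\<^sub>v x" by (rule minus_mult_distrib_mat_vec[OF A B x])
  then have "ip ((A - B) *\<^sub>v x) x = ip (A *\<^sub>v x) x - ip (B *\<^sub>v x) x"
    using A B by (simp add: ip_minus_left)
  then have "\<bar>Re (ip (A *\<^sub>v x) x) - Re (ip (B *\<^sub>v x) x)\<bar> = \<bar>Re (ip ((A - B) *\<^sub>v x) x)\<bar>" by simp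
  also have "\<dots> \<le> cmod (ip ((A - B) *\<^sub>v x) x)" by (rule abs_Re_le_cmod)
  also have "\<dots> \<le> vnorm ((A - B) *\<^sub>v x) * vnorm x" by (rule cauchy_schwarz) (use AB x A B in simp)
  also have "\<dots> \<le> op_norm (A - B) * vnorm x * vnorm x"
    by (rule mult_right_mono[OF opn_le vnorm_nonneg]) (use carrier_matD[OF B] x in simp)
  finally show ?thesis by (simp add: power2_eq_square mult.assoc)
qed

theorem lemma2p25:
  fixes n q :: nat and A B :: "complex mat"
  assumes "hermitian_mat n A" and "hermitian_mat n B"
  shows "cmod (complex_of_real (sig_ind n A q) * det A - complex_of_real (sig_ind n B q) * det B)
         \<le> op_norm (A - B) * (\<Sum>i<n. op_norm A ^ i * op_norm B ^ (n - 1 - i))"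
proof -
  have Ac: "A \<in> carrier_mat n n" and Bc: "B \<in> carrier_mat n n"
    using assms hermitian_adj by auto
  obtain U a where Uc: "U \<in> carrier_mat n n" and u: "adj U * U = 1\<^sub>m n"
    and DA: "adj U * A * U = dmat n a" and sa: "\<forall>i j. i \<le> j \<longrightarrow> j < n \<longrightarrow> a j \<le> a i"
    using spectral[OF assms(1)] by blast
  obtain V b where Vc: "V \<in> carrier_mat n n" and v: "adj V * V = 1\<^sub>m n"
    and DB: "adj V * B * V = dmat n b" and sb: "\<forall>i j. i \<le> j \<longrightarrow> j < n \<longrightarrow> b j \<le> b i"
    using spectral[OF assms(2)] by blast
  define d where "d = op_norm (A - B)"
  define x where "x = op_norm A"
  define y where "y = op_norm B"
  have d0: "0 \<le> d" unfolding d_def by (rule opn_nonneg)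
  have x0: "0 \<le> x" unfolding x_def by (rule opn_nonneg)
  have y0: "0 \<le> y" unfolding y_def by (rule opn_nonneg)
  have S0: "0 \<le> (\<Sum>i<n. x ^ i * y ^ (n - 1 - i))" using x0 y0 by (intro sum_nonneg) simp
  have R0: "0 \<le> d * (\<Sum>i<n. x ^ i * y ^ (n - 1 - i))" using d0 S0 by simp
  have H1: "Re (ip (A *\<^sub>v z) z) - Re (ip (B *\<^sub>v z) z) \<le> d * (vnorm z)^2" if "z \<in> carrier_vec n" for z
    using form_bound[OF Ac Bc that] unfolding d_def by linarith
  have H2: "Re (ip (B *\<^sub>v z) z) - Re (ip (A *\<^sub>v z) z) \<le> d * (vnorm z)^2" if "z \<in> carrier_vec n" for z
    using form_bound[OF Ac Bc that] unfolding d_def by linarith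
  have ab: "\<bar>a k - b k\<bar> \<le> d" if k: "k < n" for k
    using weyl_half[OF Ac Uc u DA sa Bc Vc v DB sb H1 k] weyl_half[OF Bc Vc v DB sb Ac Uc u DA sa H2 k]
    by linarith
  have ax: "\<bar>a k\<bar> \<le> x" if "k < n" for k unfolding x_def by (rule decomp_eig_bound[OF Uc u Ac DA that])
  have by': "\<bar>b k\<bar> \<le> y" if "k < n" for k unfolding y_def by (rule decomp_eig_bound[OF Vc v Bc DB that])
  have detA: "det A = complex_of_real (\<Prod>i<n. a i)" using decomp_det[OF Uc u Ac DA] by simp
  have detB: "det B = complex_of_real (\<Prod>i<n. b i)" using decomp_det[OF Vc v Bc DB] by simp
  have pA: "pos_eig_count A = card {i. i < n \<and> a i > 0}" and nA: "neg_eig_count A = card {i. i < n \<and> a i < 0}"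
    using decomp_counts[OF Uc u Ac DA] by auto
  have pB: "pos_eig_count B = card {i. i < n \<and> b i > 0}" and nB: "neg_eig_count B = card {i. i < n \<and> b i < 0}"
    using decomp_counts[OF Vc v Bc DB] by auto
  have same_if: "sig_ind n A q = sig_ind n B q"
    if "\<forall>k<n. d < \<bar>a k\<bar> \<or> d < \<bar>b k\<bar>"
  proof -
    have sgn: "(a k > 0 \<longleftrightarrow> b k > 0) \<and> (a k < 0 \<longleftrightarrow> b k < 0)" if k: "k < n" for k
      using ab[OF k] \<open>\<forall>k<n. d < \<bar>a k\<bar> \<or> d < \<bar>b k\<bar>\<close> k by auto
    have "{i. i < n \<and> a i > 0} = {i. i < n \<and> b i > 0}" using sgn by auto
    moreover have "{i. i < n \<and> a i < 0} = {i. i < n \<and> b i < 0}" using sgn by auto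
    ultimately show ?thesis unfolding sig_ind_def pA nA pB nB by simp
  qed
  have sig01: "sig_ind n C q = 0 \<or> sig_ind n C q = 1" for C by (simp add: sig_ind_def)
  show ?thesis
  proof (cases "sig_ind n A q = sig_ind n B q")
    case True
    show ?thesis
    proof (cases "sig_ind n A q = 0")
      case True
      then show ?thesis using \<open>sig_ind n A q = sig_ind n B q\<close> R0 unfolding d_def x_def y_def by simp
    next
      case False
      then have "sig_ind n A q = 1" "sig_ind n B q = 1" using sig01 \<open>sig_ind n A q = sig_ind n B q\<close> by metis+
      then have "cmod (complex_of_real (sig_ind n A q) * det A - complex_of_real (sig_ind n B q) * det B)
          = \<bar>(\<Prod>i<n. a i) - (\<Prod>i<n. b i)\<bar>"
        unfolding detA detB by (simp only: of_real_1 mult_1_left of_real_diff[symmetric] norm_of_real)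
      also have "\<dots> \<le> d * (\<Sum>i<n. x ^ i * y ^ (n - 1 - i))"
        by (rule prod_diff_bound) (use ax by' ab in auto)
      finally show ?thesis unfolding d_def x_def y_def .
    qed
  next
    case False
    then obtain k where k: "k < n" and dk: "\<bar>a k\<bar> \<le> d" "\<bar>b k\<bar> \<le> d"
      using same_if by (meson not_less)
    have n1: "n - 1 < n" using k by simp
    show ?thesis
    proof (cases "sig_ind n A q = 1")
      case True
      then have "sig_ind n B q = 0" using False sig01 by metis
      then have "cmod (complex_of_real (sig_ind n A q) * det A - complex_of_real (sig_ind n B q) * det B)
          = \<bar>\<Prod>i<n. a i\<bar>" using True unfolding detA
        by (simp only: of_real_1 of_real_0 mult_1_left mult_zero_left diff_zero norm_of_real)
      also have "\<dots> \<le> d * x ^ (n - 1)" by (rule small_eig_bound[where f=a and k=k]) (use ax k dk in auto)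
      also have "\<dots> = d * (x ^ (n - 1) * y ^ (n - 1 - (n - 1)))" by simp
      also have "\<dots> \<le> d * (\<Sum>i<n. x ^ i * y ^ (n - 1 - i))"
        by (intro mult_left_mono member_le_sum[where f = "\<lambda>i. x ^ i * y ^ (n - 1 - i)"])
          (use n1 x0 y0 d0 in auto)
      finally show ?thesis unfolding d_def x_def y_def .
    next
      case False
      then have "sig_ind n A q = 0" "sig_ind n B q = 1" using \<open>sig_ind n A q \<noteq> sig_ind n B q\<close> sig01 by metis+
      then have "cmod (complex_of_real (sig_ind n A q) * det A - complex_of_real (sig_ind n B q) * det B)
          = \<bar>\<Prod>i<n. b i\<bar>" unfolding detB
        by (simp only: of_real_1 of_real_0 mult_1_left mult_zero_left diff_0 norm_minus_cancel norm_of_real)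
      also have "\<dots> \<le> d * y ^ (n - 1)" by (rule small_eig_bound[where f=b and k=k]) (use by' k dk in auto)
      also have "\<dots> = d * (x ^ 0 * y ^ (n - 1 - 0))" by simp
      also have "\<dots> \<le> d * (\<Sum>i<n. x ^ i * y ^ (n - 1 - i))"
        by (intro mult_left_mono member_le_sum[where f = "\<lambda>i. x ^ i * y ^ (n - 1 - i)"])
          (use k x0 y0 d0 in auto)
      finally show ?thesis unfolding d_def x_def y_def .
    qed
  qed
qed

end
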